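(* Let $\rho=(a^b)$ be a partition of $n=ab$ with $a,b\ge 3$, and let $\alpha(\rho)=(a+1,a^{\,b-2},a-1)$ and $\beta(\rho)=(a^{\,b-1},a-1,1)$. Then each of $\alpha(\rho)$ and $\beta(\rho)$ belongs to a clique of size $4$ in $G_n$. In particular, $\alpha(\rho),\beta(\rho)\in\bigcup_{r\ge 3}L_r(n)$, i.e. both have local simplex dimension at least $3$.
   Context: The partition graph $G_n$ has as vertices the integer partitions of $n$; two partitions are adjacent if one is obtained from the other by a single elementary unit transfer followed by reordering: decrease one part by $1$ and either increase a different part by $1$ or create a new part equal to $1$, then delete a part that became $0$ and sort in nonincreasing order (the result being different from the original). Exponent notation $a^k$ denotes $k$ parts equal to $a$. The local simplex dimension of a vertex $v$ is $m-1$ where $m$ is the largest size of a clique of $G_n$ containing $v$; $L_r(n)$ is the set of vertices of local simplex dimension $r$. *)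

theory Defs
  imports Main
begin

definition is_partition :: "nat \<Rightarrow> nat list \<Rightarrow> bool" where
  "is_partition n p \<longleftrightarrow> sorted_wrt (\<ge>) p \<and> 0 \<notin> set p \<and> sum_list p = n"

definition partitions :: "nat \<Rightarrow> nat list set" where
  "partitions n = {p. is_partition n p}"

definition normalize :: "nat list \<Rightarrow> nat list" where
  "normalize xs = rev (sort (filter (\<lambda>x. x \<noteq> 0) xs))"

definition unit_transfer :: "nat list \<Rightarrow> nat list \<Rightarrow> bool" where
  "unit_transfer p q \<longleftrightarrow>
     (\<exists>i < length p.
        (\<exists>j < length p. j \<noteq> i \<and> q = normalize (p[i := p ! i - 1, j := p ! j + 1]))
      \<or> q = normalize (p[i := p ! i - 1] @ [1]))"

definition pg_adj :: "nat \<Rightarrow> nat list \<Rightarrow> nat list \<Rightarrow> bool" where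
  "pg_adj n p q \<longleftrightarrow> p \<in> partitions n \<and> q \<in> partitions n \<and> p \<noteq> q \<and>
     (unit_transfer p q \<or> unit_transfer q p)"

definition pg_clique :: "nat \<Rightarrow> nat list set \<Rightarrow> bool" where
  "pg_clique n K \<longleftrightarrow> K \<subseteq> partitions n \<and> (\<forall>p\<in>K. \<forall>q\<in>K. p \<noteq> q \<longrightarrow> pg_adj n p q)"

definition local_simplex_dim :: "nat \<Rightarrow> nat list \<Rightarrow> nat" where
  "local_simplex_dim n v = Max {card K | K. pg_clique n K \<and> v \<in> K} - 1"

definition L :: "nat \<Rightarrow> nat \<Rightarrow> nat list set" where
  "L r n = {v \<in> partitions n. local_simplex_dim n v = r}"

definition alpha_part :: "nat \<Rightarrow> nat \<Rightarrow> nat list" where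
  "alpha_part a b = (a + 1) # replicate (b - 2) a @ [a - 1]"

definition beta_part :: "nat \<Rightarrow> nat \<Rightarrow> nat list" where
  "beta_part a b = replicate (b - 1) a @ [a - 1, 1]"

end

theory Submission
  imports Defs "HOL-Library.Multiset"
begin

lemma normalize_eq:
  fixes q ys :: "nat list"
  assumes "sorted_wrt (\<ge>) q" "0 \<notin> set q" "mset ys = mset q"
  shows "normalize ys = q"
proof -
  have "0 \<notin> set ys" using assms(2,3) by (metis set_mset_mset)
  hence "\<forall>x\<in>set ys. x \<noteq> 0" by metis
  hence f: "filter (\<lambda>x. x\<noteq>0) ys = ys" by (rule filter_True)
  have "sort ys = rev q"
    by (rule properties_for_sort) (use assms in \<open>auto simp: sorted_wrt_rev\<close>)
  thus ?thesis using f by (simp add: normalize_def)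
qed

lemma two_idx:
  assumes "mset p = add_mset x (add_mset y M)"
  obtains i j where "i < length p" "j < length p" "i \<noteq> j" "p!i = x" "p!j = y"
proof -
  have "x \<in># mset p" using assms by simp
  hence "x \<in> set p" by simp
  then obtain i where i: "i < length p" "p!i = x" by (metis in_set_conv_nth)
  have "p = take i p @ p!i # drop (Suc i) p" by (rule id_take_nth_drop[OF i(1)])
  hence e: "mset p = mset (take i p @ p!i # drop (Suc i) p)" by (rule arg_cong)
  have "mset p = add_mset x (mset (take i p @ drop (Suc i) p))"
    unfolding e using i(2) by simp
  hence "mset (take i p @ drop (Suc i) p) = add_mset y M" using assms by simp
  hence "y \<in># mset (take i p @ drop (Suc i) p)" by simp
  hence "y \<in> set (take i p) \<or> y \<in> set (drop (Suc i) p)" by simp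
  thus ?thesis
  proof
    assume "y \<in> set (take i p)"
    then obtain k where "k < length (take i p)" "take i p ! k = y" by (metis in_set_conv_nth)
    thus ?thesis using that[of i k] i by auto
  next
    assume "y \<in> set (drop (Suc i) p)"
    then obtain k where "k < length (drop (Suc i) p)" "drop (Suc i) p ! k = y" by (metis in_set_conv_nth)
    thus ?thesis using that[of i "Suc i + k"] i by auto
  qed
qed

lemma ut_move:
  assumes "mset p = add_mset x (add_mset y M)" "x \<ge> 2"
    "sorted_wrt (\<ge>) q" "0 \<notin> set q" "mset q = add_mset (x-1) (add_mset (y+1) M)"
  shows "unit_transfer p q"
proof -
  obtain i j where ij: "i < length p" "j < length p" "i \<noteq> j" "p!i = x" "p!j = y"
    using two_idx[OF assms(1)] by blast
  have "mset (p[i := p ! i - 1, j := p ! j + 1]) = mset q"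
    using ij assms(1,5) by (simp add: mset_update)
  hence "q = normalize (p[i := p ! i - 1, j := p ! j + 1])"
    using normalize_eq assms(3,4) by metis
  thus ?thesis unfolding unit_transfer_def using ij by blast
qed

lemma ut_new:
  assumes "mset p = add_mset x M" "x \<ge> 2"
    "sorted_wrt (\<ge>) q" "0 \<notin> set q" "mset q = add_mset (x-1) (add_mset 1 M)"
  shows "unit_transfer p q"
proof -
  have "x \<in># mset p" using assms by simp
  hence "x \<in> set p" by simp
  then obtain i where i: "i < length p" "p!i = x" by (metis in_set_conv_nth)
  have "mset (p[i := p ! i - 1] @ [1]) = mset q"
    using i assms(1,5) by (simp add: mset_update)
  hence "q = normalize (p[i := p ! i - 1] @ [1])"
    using normalize_eq assms(3,4) by metis
  thus ?thesis unfolding unit_transfer_def using i by blast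
qed

lemma sorted_rep: "sorted_wrt (\<ge>) (replicate k (x::nat))"
  by (induction k) auto

lemma clique4:
  assumes "p1 \<in> partitions n" "p2 \<in> partitions n" "p3 \<in> partitions n" "p4 \<in> partitions n"
    "p1 \<noteq> p2" "p1 \<noteq> p3" "p1 \<noteq> p4" "p2 \<noteq> p3" "p2 \<noteq> p4" "p3 \<noteq> p4"
    "unit_transfer p1 p2" "unit_transfer p1 p3" "unit_transfer p1 p4"
    "unit_transfer p2 p3" "unit_transfer p2 p4" "unit_transfer p3 p4"
  shows "pg_clique n {p1,p2,p3,p4} \<and> card {p1,p2,p3,p4} = 4"
  using assms unfolding pg_clique_def pg_adj_def by auto

lemma len_le_sum: "0 \<notin> set xs \<Longrightarrow> length xs \<le> sum_list (xs::nat list)"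
  by (induction xs) (auto simp: Suc_le_eq)

lemma finite_partitions: "finite (partitions n)"
proof -
  have "partitions n \<subseteq> {xs. set xs \<subseteq> {0..n} \<and> length xs \<le> n}"
    unfolding partitions_def is_partition_def
    using len_le_sum member_le_sum_list by fastforce
  moreover have "finite {xs. set xs \<subseteq> {0..n::nat} \<and> length xs \<le> n}"
    by (rule finite_lists_length_le) simp
  ultimately show ?thesis by (rule finite_subset)
qed

lemma dim_ge3:
  assumes "pg_clique n K" "card K = 4" "v \<in> K"
  shows "v \<in> (\<Union>r\<in>{3..}. L r n)"
proof -
  let ?S = "{card K | K. pg_clique n K \<and> v \<in> K}"
  have "?S \<subseteq> card ` Pow (partitions n)" unfolding pg_clique_def by auto
  hence fin: "finite ?S" using finite_partitions by (meson finite_imageI finite_Pow_iff finite_subset)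
  have "4 \<in> ?S" using assms by auto
  hence "Max ?S \<ge> 4" using fin by (meson Max_ge)
  hence "local_simplex_dim n v \<ge> 3" unfolding local_simplex_dim_def by linarith
  moreover have "v \<in> partitions n" using assms unfolding pg_clique_def by auto
  ultimately show ?thesis unfolding L_def by auto
qed

theorem proposition4p7:
  fixes a b n :: nat
  assumes "a \<ge> 3" and "b \<ge> 3" and "n = a * b"
  shows "(\<exists>K. pg_clique n K \<and> card K = 4 \<and> alpha_part a b \<in> K)
       \<and> (\<exists>K. pg_clique n K \<and> card K = 4 \<and> beta_part a b \<in> K)
       \<and> alpha_part a b \<in> (\<Union>r\<in>{3..}. L r n)
       \<and> beta_part a b \<in> (\<Union>r\<in>{3..}. L r n)"
proof -
  obtain d c where dc: "a = d + 3" "b = c + 3"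
    using assms(1,2) by (metis add.commute le_add_diff_inverse)
  have alpha: "alpha_part a b = (d+4) # replicate (c+1) (d+3) @ [d+2]"
    unfolding alpha_part_def dc by (simp add: numeral_eq_Suc)
  have beta: "beta_part a b = replicate (c+2) (d+3) @ [d+2, 1]"
    unfolding beta_part_def dc by (simp add: numeral_eq_Suc)
  define P1 where "P1 = (d+4) # replicate (c+1) (d+3) @ [d+2]"
  define P2 where "P2 = (d+5) # replicate (c+1) (d+3) @ [d+1]"
  define P3 where "P3 = (d+4) # (d+4) # replicate c (d+3) @ [d+1]"
  define P4 where "P4 = (d+4) # replicate (c+1) (d+3) @ [d+1, 1]"
  define Q1 where "Q1 = replicate (c+2) (d+3) @ [d+2, 1]"
  define Q2 where "Q2 = (d+4) # replicate c (d+3) @ [d+2, d+2, 1]"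
  define Q3 where "Q3 = replicate (c+1) (d+3) @ [d+2, d+2, 2]"
  define Q4 where "Q4 = replicate (c+1) (d+3) @ [d+2, d+2, 1, 1]"
  have n: "n = (d+3)*(c+3)" using assms(3) dc by simp
  note defs = P1_def P2_def P3_def P4_def Q1_def Q2_def Q3_def Q4_def
  have srt: "sorted_wrt (\<ge>) P1" "sorted_wrt (\<ge>) P2" "sorted_wrt (\<ge>) P3" "sorted_wrt (\<ge>) P4"
     "sorted_wrt (\<ge>) Q1" "sorted_wrt (\<ge>) Q2" "sorted_wrt (\<ge>) Q3" "sorted_wrt (\<ge>) Q4"
    unfolding defs by (auto simp: sorted_wrt_append sorted_rep)
  have nz: "0 \<notin> set P1" "0 \<notin> set P2" "0 \<notin> set P3" "0 \<notin> set P4"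
     "0 \<notin> set Q1" "0 \<notin> set Q2" "0 \<notin> set Q3" "0 \<notin> set Q4"
    unfolding defs by auto
  have sm: "sum_list P1 = n" "sum_list P2 = n" "sum_list P3 = n" "sum_list P4 = n"
     "sum_list Q1 = n" "sum_list Q2 = n" "sum_list Q3 = n" "sum_list Q4 = n"
    unfolding defs n by (simp_all add: sum_list_replicate algebra_simps)
  have parts: "P1 \<in> partitions n" "P2 \<in> partitions n" "P3 \<in> partitions n" "P4 \<in> partitions n"
     "Q1 \<in> partitions n" "Q2 \<in> partitions n" "Q3 \<in> partitions n" "Q4 \<in> partitions n"
    using srt nz sm unfolding partitions_def is_partition_def by auto
  have ms: "mset P1 = add_mset (d+4) (add_mset (d+2) (replicate_mset (c+1) (d+3)))"
     "mset P2 = add_mset (d+5) (add_mset (d+1) (replicate_mset (c+1) (d+3)))"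
     "mset P3 = add_mset (d+4) (add_mset (d+4) (add_mset (d+1) (replicate_mset c (d+3))))"
     "mset P4 = add_mset (d+4) (add_mset (d+1) (add_mset 1 (replicate_mset (c+1) (d+3))))"
     "mset Q1 = add_mset (d+2) (add_mset 1 (replicate_mset (c+2) (d+3)))"
     "mset Q2 = add_mset (d+4) (add_mset (d+2) (add_mset (d+2) (add_mset 1 (replicate_mset c (d+3)))))"
     "mset Q3 = add_mset (d+2) (add_mset (d+2) (add_mset 2 (replicate_mset (c+1) (d+3))))"
     "mset Q4 = add_mset (d+2) (add_mset (d+2) (add_mset 1 (add_mset 1 (replicate_mset (c+1) (d+3)))))"
    unfolding defs by (simp_all add: add_mset_commute)
  have A: "pg_clique n {P1,P2,P3,P4} \<and> card {P1,P2,P3,P4} = 4"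
  proof (rule clique4[OF parts(1-4)])
    have h: "hd P1 = d+4" "hd P2 = d+5" "hd P3 = d+4" "hd P4 = d+4"
      "length P1 = c+3" "length P3 = c+3" "length P4 = c+4" "last P1 = d+2" "last P3 = d+1"
      unfolding defs by simp_all
    show "P1 \<noteq> P2" "P1 \<noteq> P3" "P1 \<noteq> P4" "P2 \<noteq> P3" "P2 \<noteq> P4" "P3 \<noteq> P4"
      using h by auto
    show "unit_transfer P1 P2"
      by (rule ut_move[where x="d+2" and y="d+4" and M="replicate_mset (c+1) (d+3)"])
         (use srt(2) nz(2) ms(1) ms(2) in \<open>simp_all add: add_mset_commute numeral_eq_Suc\<close>)
    show "unit_transfer P1 P3"
      by (rule ut_move[where x="d+2" and y="d+3" and M="add_mset (d+4) (replicate_mset c (d+3))"])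
         (use srt(3) nz(3) ms(1) ms(3) in \<open>simp_all add: add_mset_commute numeral_eq_Suc\<close>)
    show "unit_transfer P1 P4"
      by (rule ut_new[where x="d+2" and M="add_mset (d+4) (replicate_mset (c+1) (d+3))"])
         (use srt(4) nz(4) ms(1) ms(4) in \<open>simp_all add: add_mset_commute numeral_eq_Suc\<close>)
    show "unit_transfer P2 P3"
      by (rule ut_move[where x="d+5" and y="d+3" and M="add_mset (d+1) (replicate_mset c (d+3))"])
         (use srt(3) nz(3) ms(2) ms(3) in \<open>simp_all add: add_mset_commute numeral_eq_Suc\<close>)
    show "unit_transfer P2 P4"
      by (rule ut_new[where x="d+5" and M="add_mset (d+1) (replicate_mset (c+1) (d+3))"])
         (use srt(4) nz(4) ms(2) ms(4) in \<open>simp_all add: add_mset_commute numeral_eq_Suc\<close>)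
    show "unit_transfer P3 P4"
      by (rule ut_new[where x="d+4" and M="add_mset (d+4) (add_mset (d+1) (replicate_mset c (d+3)))"])
         (use srt(4) nz(4) ms(3) ms(4) in \<open>simp_all add: add_mset_commute numeral_eq_Suc\<close>)
  qed
  have B: "pg_clique n {Q1,Q2,Q3,Q4} \<and> card {Q1,Q2,Q3,Q4} = 4"
  proof (rule clique4[OF parts(5-8)])
    show "Q1 \<noteq> Q2" "Q1 \<noteq> Q3" "Q1 \<noteq> Q4" "Q2 \<noteq> Q3" "Q2 \<noteq> Q4" "Q3 \<noteq> Q4"
    proof -
      have h: "hd Q1 = d+3" "hd Q2 = d+4" "hd Q3 = d+3"
        "length Q1 = c+4" "length Q2 = c+4" "length Q3 = c+4" "length Q4 = c+5"
        "last Q1 = 1" "last Q3 = 2"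
        unfolding defs by simp_all
      show "Q1 \<noteq> Q2" "Q1 \<noteq> Q3" "Q1 \<noteq> Q4" "Q2 \<noteq> Q3" "Q2 \<noteq> Q4" "Q3 \<noteq> Q4"
        using h by auto
    qed
    show "unit_transfer Q1 Q2"
      by (rule ut_move[where x="d+3" and y="d+3" and M="add_mset (d+2) (add_mset 1 (replicate_mset c (d+3)))"])
         (use srt(6) nz(6) ms(5) ms(6) in \<open>simp_all add: add_mset_commute numeral_eq_Suc\<close>)
    show "unit_transfer Q1 Q3"
      by (rule ut_move[where x="d+3" and y="1" and M="add_mset (d+2) (replicate_mset (c+1) (d+3))"])
         (use srt(7) nz(7) ms(5) ms(7) in \<open>simp_all add: add_mset_commute numeral_eq_Suc\<close>)
    show "unit_transfer Q1 Q4"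
      by (rule ut_new[where x="d+3" and M="add_mset (d+2) (add_mset 1 (replicate_mset (c+1) (d+3)))"])
         (use srt(8) nz(8) ms(5) ms(8) in \<open>simp_all add: add_mset_commute numeral_eq_Suc\<close>)
    show "unit_transfer Q2 Q3"
      by (rule ut_move[where x="d+4" and y="1" and M="add_mset (d+2) (add_mset (d+2) (replicate_mset c (d+3)))"])
         (use srt(7) nz(7) ms(6) ms(7) in \<open>simp_all add: add_mset_commute numeral_eq_Suc\<close>)
    show "unit_transfer Q2 Q4"
      by (rule ut_new[where x="d+4" and M="add_mset (d+2) (add_mset (d+2) (add_mset 1 (replicate_mset c (d+3))))"])
         (use srt(8) nz(8) ms(6) ms(8) in \<open>simp_all add: add_mset_commute numeral_eq_Suc\<close>)
    show "unit_transfer Q3 Q4"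
      by (rule ut_new[where x="2" and M="add_mset (d+2) (add_mset (d+2) (replicate_mset (c+1) (d+3)))"])
         (use srt(8) nz(8) ms(7) ms(8) in \<open>simp_all add: add_mset_commute numeral_eq_Suc\<close>)
  qed
  have a1: "alpha_part a b \<in> {P1,P2,P3,P4}" using alpha P1_def by simp
  have b1: "beta_part a b \<in> {Q1,Q2,Q3,Q4}" using beta Q1_def by simp
  have c1: "\<exists>K. pg_clique n K \<and> card K = 4 \<and> alpha_part a b \<in> K"
    by (rule exI[where x="{P1,P2,P3,P4}"]) (rule conjI[OF conjunct1[OF A] conjI[OF conjunct2[OF A] a1]])
  have c2: "\<exists>K. pg_clique n K \<and> card K = 4 \<and> beta_part a b \<in> K"
    by (rule exI[where x="{Q1,Q2,Q3,Q4}"]) (rule conjI[OF conjunct1[OF B] conjI[OF conjunct2[OF B] b1]])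
  have c3: "alpha_part a b \<in> (\<Union>r\<in>{3..}. L r n)"
    by (rule dim_ge3[OF conjunct1[OF A] conjunct2[OF A] a1])
  have c4: "beta_part a b \<in> (\<Union>r\<in>{3..}. L r n)"
    by (rule dim_ge3[OF conjunct1[OF B] conjunct2[OF B] b1])
  show ?thesis using c1 c2 c3 c4 by (intro conjI)
qed

end
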